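(* Let $(X,S)$ be an $S$-metric space, $r\ge0$, and let $\{\xi_n\}$, $\{\eta_n\}$ be sequences in $X$ such that $S(\xi_n,\xi_n,\eta_n)\to0$ as $n\to\infty$. Then $\{\xi_n\}$ is $r$-statistically convergent to $\xi$ if and only if $\{\eta_n\}$ is $r$-statistically convergent to $\xi$.
   Context: An $S$-metric on a nonempty set $X$ is a function $S:X^3\to[0,\infty)$ such that for all $x,y,z,a\in X$: $S(x,y,z)=0$ if and only if $x=y=z$, and $S(x,y,z)\le S(x,x,a)+S(y,y,a)+S(z,z,a)$. For $B\subset\mathbb N$ the natural density is $\delta(B)=\lim_{n\to\infty}\frac{|\{k\in B:k\le n\}|}{n}$ when the limit exists. For $r\ge0$, $\{\xi_n\}$ is $r$-statistically convergent to $\xi$ if for every $\varepsilon>0$, $\delta(\{n\in\mathbb N: S(\xi_n,\xi_n,\xi)\ge r+\varepsilon\})=0$. *)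

theory Defs
  imports Complex_Main
begin

definition S_metric :: "'a set \<Rightarrow> ('a \<Rightarrow> 'a \<Rightarrow> 'a \<Rightarrow> real) \<Rightarrow> bool" where
  "S_metric X S \<longleftrightarrow> X \<noteq> {} \<and>
     (\<forall>x\<in>X. \<forall>y\<in>X. \<forall>z\<in>X. S x y z \<ge> 0) \<and>
     (\<forall>x\<in>X. \<forall>y\<in>X. \<forall>z\<in>X. S x y z = 0 \<longleftrightarrow> x = y \<and> y = z) \<and>
     (\<forall>x\<in>X. \<forall>y\<in>X. \<forall>z\<in>X. \<forall>a\<in>X. S x y z \<le> S x x a + S y y a + S z z a)"

definition has_natural_density :: "nat set \<Rightarrow> real \<Rightarrow> bool" where
  "has_natural_density B d \<longleftrightarrow>
     (\<lambda>n. real (card {k \<in> B. 1 \<le> k \<and> k \<le> n}) / real n) \<longlonglongrightarrow> d"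

definition r_stat_convergent ::
  "('a \<Rightarrow> 'a \<Rightarrow> 'a \<Rightarrow> real) \<Rightarrow> real \<Rightarrow> (nat \<Rightarrow> 'a) \<Rightarrow> 'a \<Rightarrow> bool" where
  "r_stat_convergent S r xs x \<longleftrightarrow>
     (\<forall>\<epsilon>>0. has_natural_density {n. n \<ge> 1 \<and> S (xs n) (xs n) x \<ge> r + \<epsilon>} 0)"

end

theory Submission
  imports Defs
begin

lemma density_zero_mono:
  assumes "A \<subseteq> B \<union> F" "finite F" "has_natural_density B 0"
  shows "has_natural_density A 0"
  unfolding has_natural_density_def
proof (rule real_tendsto_sandwich[where f="\<lambda>n. 0" and h="\<lambda>n. real (card {k \<in> B. 1 \<le> k \<and> k \<le> n}) / real n + real (card F) / real n"])
  show "\<forall>\<^sub>F n in sequentially. 0 \<le> real (card {k \<in> A. 1 \<le> k \<and> k \<le> n}) / real n" by simp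
  show "\<forall>\<^sub>F n in sequentially. real (card {k \<in> A. 1 \<le> k \<and> k \<le> n}) / real n
      \<le> real (card {k \<in> B. 1 \<le> k \<and> k \<le> n}) / real n + real (card F) / real n"
  proof (rule always_eventually, rule allI)
    fix n
    have "{k \<in> A. 1 \<le> k \<and> k \<le> n} \<subseteq> {k \<in> B. 1 \<le> k \<and> k \<le> n} \<union> F" using assms(1) by auto
    hence "card {k \<in> A. 1 \<le> k \<and> k \<le> n} \<le> card ({k \<in> B. 1 \<le> k \<and> k \<le> n} \<union> F)"
      by (intro card_mono) (use assms(2) in auto)
    also have "\<dots> \<le> card {k \<in> B. 1 \<le> k \<and> k \<le> n} + card F" by (rule card_Un_le)
    finally have "real (card {k \<in> A. 1 \<le> k \<and> k \<le> n}) \<le> real (card {k \<in> B. 1 \<le> k \<and> k \<le> n}) + real (card F)" by linarith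
    thus "real (card {k \<in> A. 1 \<le> k \<and> k \<le> n}) / real n
      \<le> real (card {k \<in> B. 1 \<le> k \<and> k \<le> n}) / real n + real (card F) / real n"
      by (simp add: add_divide_distrib[symmetric] divide_right_mono)
  qed
  show "(\<lambda>n. 0::real) \<longlonglongrightarrow> 0" by simp
  show "(\<lambda>n. real (card {k \<in> B. 1 \<le> k \<and> k \<le> n}) / real n + real (card F) / real n) \<longlonglongrightarrow> 0"
    using tendsto_add[OF assms(3)[unfolded has_natural_density_def] lim_const_over_n[of "real (card F)"]] by simp
qed

lemma one_dir:
  fixes T U d :: "nat \<Rightarrow> real" and r \<epsilon> :: real
  assumes bound: "\<And>n. T n \<le> U n + d n" and d: "d \<longlonglongrightarrow> 0"
    and conv: "\<And>\<epsilon>. \<epsilon> > 0 \<Longrightarrow> has_natural_density {n. n \<ge> 1 \<and> U n \<ge> r + \<epsilon>} 0"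
    and e: "\<epsilon> > 0"
  shows "has_natural_density {n. n \<ge> 1 \<and> T n \<ge> r + \<epsilon>} 0"
proof -
  have "\<forall>\<^sub>F n in sequentially. dist (d n) 0 < \<epsilon>/2" using d e unfolding tendsto_iff by (meson half_gt_zero)
  then obtain N where N: "\<And>n. n \<ge> N \<Longrightarrow> \<bar>d n\<bar> < \<epsilon>/2" by (auto simp: eventually_sequentially)
  show ?thesis
  proof (rule density_zero_mono[where B="{n. n \<ge> 1 \<and> U n \<ge> r + \<epsilon>/2}" and F="{..<N}"])
    show "{n. n \<ge> 1 \<and> T n \<ge> r + \<epsilon>} \<subseteq> {n. n \<ge> 1 \<and> U n \<ge> r + \<epsilon>/2} \<union> {..<N}"
    proof
      fix n assume n: "n \<in> {n. n \<ge> 1 \<and> T n \<ge> r + \<epsilon>}"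
      show "n \<in> {n. n \<ge> 1 \<and> U n \<ge> r + \<epsilon>/2} \<union> {..<N}"
      proof (cases "n < N")
        case False
        with N[of n] bound[of n] n show ?thesis by auto
      qed simp
    qed
  qed (use conv e in auto)
qed

theorem theorem4p8:
  fixes X :: "'a set" and S :: "'a \<Rightarrow> 'a \<Rightarrow> 'a \<Rightarrow> real"
    and r :: real and xi eta :: "nat \<Rightarrow> 'a" and x :: 'a
  assumes "S_metric X S" and "r \<ge> 0"
    and "\<And>n. xi n \<in> X" and "\<And>n. eta n \<in> X" and "x \<in> X"
    and "(\<lambda>n. S (xi n) (xi n) (eta n)) \<longlonglongrightarrow> 0"
  shows "r_stat_convergent S r xi x \<longleftrightarrow> r_stat_convergent S r eta x"
proof -
  have tri: "\<And>a b c z. a \<in> X \<Longrightarrow> b \<in> X \<Longrightarrow> c \<in> X \<Longrightarrow> z \<in> X \<Longrightarrow> S a b c \<le> S a a z + S b b z + S c c z"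
    using assms(1) unfolding S_metric_def by blast
  have zero: "\<And>a. a \<in> X \<Longrightarrow> S a a a = 0" using assms(1) unfolding S_metric_def by blast
  have sym: "\<And>a b. a \<in> X \<Longrightarrow> b \<in> X \<Longrightarrow> S a a b = S b b a"
  proof -
    fix a b assume ab: "a \<in> X" "b \<in> X"
    have "S a a b \<le> S b b a" using tri[of a a b a] ab zero[of a] by simp
    moreover have "S b b a \<le> S a a b" using tri[of b b a b] ab zero[of b] by simp
    ultimately show "S a a b = S b b a" by simp
  qed
  define d where "d n = 2 * S (xi n) (xi n) (eta n)" for n
  have d: "d \<longlonglongrightarrow> 0" unfolding d_def using tendsto_mult_right_zero[OF assms(6), of 2] by simp
  have b1: "S (eta n) (eta n) x \<le> S (xi n) (xi n) x + d n" for n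
  proof -
    have "S (eta n) (eta n) x \<le> S (eta n) (eta n) (xi n) + S (eta n) (eta n) (xi n) + S x x (xi n)"
      using tri[of "eta n" "eta n" x "xi n"] assms(3-5) by blast
    thus ?thesis unfolding d_def using sym[of "eta n" "xi n"] sym[of x "xi n"] assms(3-5) by simp
  qed
  have b2: "S (xi n) (xi n) x \<le> S (eta n) (eta n) x + d n" for n
  proof -
    have "S (xi n) (xi n) x \<le> S (xi n) (xi n) (eta n) + S (xi n) (xi n) (eta n) + S x x (eta n)"
      using tri[of "xi n" "xi n" x "eta n"] assms(3-5) by blast
    thus ?thesis unfolding d_def using sym[of x "eta n"] assms(3-5) by simp
  qed
  show ?thesis unfolding r_stat_convergent_def
  proof safe
    fix \<epsilon> :: real assume "\<forall>\<epsilon>>0. has_natural_density {n. 1 \<le> n \<and> r + \<epsilon> \<le> S (xi n) (xi n) x} 0" "\<epsilon> > 0"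
    thus "has_natural_density {n. 1 \<le> n \<and> r + \<epsilon> \<le> S (eta n) (eta n) x} 0"
      using one_dir[where T="\<lambda>n. S (eta n) (eta n) x" and U="\<lambda>n. S (xi n) (xi n) x", OF b1 d] by blast
  next
    fix \<epsilon> :: real assume "\<forall>\<epsilon>>0. has_natural_density {n. 1 \<le> n \<and> r + \<epsilon> \<le> S (eta n) (eta n) x} 0" "\<epsilon> > 0"
    thus "has_natural_density {n. 1 \<le> n \<and> r + \<epsilon> \<le> S (xi n) (xi n) x} 0"
      using one_dir[where U="\<lambda>n. S (eta n) (eta n) x" and T="\<lambda>n. S (xi n) (xi n) x", OF b2 d] by blast
  qed
qed

end
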